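(* Let $d,s\geq 2$ be integers and let $t\geq 1$ be a real number with $t\leq d^{1/s}/s$. Let $G$ be a $K_{s,s}$-free graph of minimum degree at least $d$, and let $v$ be a vertex of $G$. Then fewer than $st$ vertices $u\in V(G)$ satisfy \[ |N(u)\cap N(v)|\geq \frac{4}{t}\,|N(v)|.\]
   Context: $N(x)$ denotes the neighbourhood of a vertex $x$ in $G$. A graph is $K_{s,s}$-free if it does not contain the complete bipartite graph $K_{s,s}$ as a (not necessarily induced) subgraph. *)

theory Defs
  imports Complex_Main
begin

definition simple_graph :: "'a set \<Rightarrow> ('a \<Rightarrow> 'a \<Rightarrow> bool) \<Rightarrow> bool" where
  "simple_graph V E \<longleftrightarrow> finite V \<and> (\<forall>x y. E x y \<longrightarrow> x \<in> V \<and> y \<in> V)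
     \<and> (\<forall>x y. E x y \<longrightarrow> E y x) \<and> (\<forall>x. \<not> E x x)"

definition nbhd :: "'a set \<Rightarrow> ('a \<Rightarrow> 'a \<Rightarrow> bool) \<Rightarrow> 'a \<Rightarrow> 'a set" where
  "nbhd V E x = {y \<in> V. E x y}"

definition min_degree_ge :: "'a set \<Rightarrow> ('a \<Rightarrow> 'a \<Rightarrow> bool) \<Rightarrow> nat \<Rightarrow> bool" where
  "min_degree_ge V E d \<longleftrightarrow> (\<forall>x\<in>V. card (nbhd V E x) \<ge> d)"

definition contains_Kss :: "'a set \<Rightarrow> ('a \<Rightarrow> 'a \<Rightarrow> bool) \<Rightarrow> nat \<Rightarrow> bool" where
  "contains_Kss V E s \<longleftrightarrow> (\<exists>A B. A \<subseteq> V \<and> B \<subseteq> V \<and> A \<inter> B = {} \<and>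
      card A = s \<and> card B = s \<and> (\<forall>a\<in>A. \<forall>b\<in>B. E a b))"

definition Kss_free :: "'a set \<Rightarrow> ('a \<Rightarrow> 'a \<Rightarrow> bool) \<Rightarrow> nat \<Rightarrow> bool" where
  "Kss_free V E s \<longleftrightarrow> \<not> contains_Kss V E s"

end

theory Submission
  imports Defs
begin

lemma pw:
  fixes x s :: nat and b :: real
  assumes "s \<ge> 1" "b \<ge> real s"
  shows "(b / s) ^ (s - 1) / s * (real x - b) \<le> real (x choose s)"
proof (cases "real x \<ge> b")
  case False
  have "(b / s) ^ (s - 1) / s \<ge> 0" using assms by simp
  hence "(b / s) ^ (s - 1) / s * (real x - b) \<le> 0"
    using False mult_nonneg_nonpos by (metis diff_le_0_iff_le nle_le)
  thus ?thesis by (meson of_nat_0_le_iff order.trans)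
next
  case True
  hence xs: "s \<le> x" using assms by linarith
  have "(b / s) ^ (s - 1) \<le> (real x / s) ^ (s - 1)"
    using True assms by (intro power_mono divide_right_mono) auto
  hence "(b / s) ^ (s - 1) * (real x / s) \<le> (real x / s) ^ (s - 1) * (real x / s)"
    by (intro mult_right_mono) auto
  also have "\<dots> = (real x / s) ^ s" using assms
    by (metis One_nat_def Suc_pred' less_eq_Suc_le power_Suc2)
  also have "\<dots> \<le> real (x choose s)" using binomial_ge_n_over_k_pow_k[OF xs] by simp
  finally have a: "(b / s) ^ (s - 1) * (real x / s) \<le> real (x choose s)" .
  have "(b / s) ^ (s - 1) / s * (real x - b) \<le> (b / s) ^ (s - 1) * (real x / s)"
    using assms by (simp add: field_simps)
  thus ?thesis using a by linarith
qed

theorem lemma2p1: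
  fixes V :: "'a set" and E :: "'a \<Rightarrow> 'a \<Rightarrow> bool" and d s :: nat and t :: real and v :: 'a
  assumes "d \<ge> 2" and "s \<ge> 2"
    and "t \<ge> 1" and "t \<le> root s (real d) / real s"
    and "simple_graph V E" and "Kss_free V E s" and "min_degree_ge V E d"
    and "v \<in> V"
  shows "real (card {u \<in> V. real (card (nbhd V E u \<inter> nbhd V E v))
                              \<ge> (4 / t) * real (card (nbhd V E v))}) < real s * t"
proof (rule ccontr)
  define N where "N = nbhd V E v"
  define U where "U = {u \<in> V. real (card (nbhd V E u \<inter> N)) \<ge> (4 / t) * real (card N)}"
  define n where "n = card N"
  define k where "k = card U"
  assume "\<not> ?thesis"
  hence kst: "real k \<ge> real s * t" unfolding k_def U_def N_def by simp
  have G: "finite V" "\<And>x y. E x y \<Longrightarrow> x \<in> V \<and> y \<in> V" "\<And>x y. E x y \<Longrightarrow> E y x" "\<And>x. \<not> E x x"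
    using assms(5) unfolding simple_graph_def by blast+
  have finN: "finite N" and NV: "N \<subseteq> V" using G unfolding N_def nbhd_def by auto
  have finU: "finite U" and UV: "U \<subseteq> V" using G unfolding U_def by auto
  have nd: "n \<ge> d" using assms(7,8) unfolding min_degree_ge_def n_def N_def by auto
  have npos: "real n > 0" using nd assms(1) by simp
  have kpos: "real k > 0" proof -
    have "real s * t > 0" using assms(2,3) by (intro mult_pos_pos) auto
    thus ?thesis using kst by linarith
  qed
  define x where "x w = card (nbhd V E w \<inter> U)" for w
  have sum1: "(\<Sum>w\<in>N. real (x w)) = (\<Sum>u\<in>U. real (card (nbhd V E u \<inter> N)))"
  proof -
    have "(\<Sum>w\<in>N. real (x w)) = (\<Sum>w\<in>N. \<Sum>u\<in>U. of_bool (E w u))"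
    proof (rule sum.cong[OF refl])
      fix w assume "w \<in> N"
      have "nbhd V E w \<inter> U = U \<inter> {u. E w u}" using UV unfolding nbhd_def by auto
      thus "real (x w) = (\<Sum>u\<in>U. of_bool (E w u))" using finU unfolding x_def by simp
    qed
    also have "\<dots> = (\<Sum>u\<in>U. \<Sum>w\<in>N. of_bool (E w u))" by (rule sum.swap)
    also have "\<dots> = (\<Sum>u\<in>U. real (card (nbhd V E u \<inter> N)))"
    proof (rule sum.cong[OF refl])
      fix u assume "u \<in> U"
      have "nbhd V E u \<inter> N = N \<inter> {w. E w u}" using NV G(3) unfolding nbhd_def by auto
      thus "(\<Sum>w\<in>N. of_bool (E w u)) = real (card (nbhd V E u \<inter> N))" using finN by simp
    qed
    finally show ?thesis .
  qed
  have lb1: "(\<Sum>w\<in>N. real (x w)) \<ge> real k * ((4 / t) * real n)"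
  proof -
    have "(\<Sum>u\<in>U. real (card (nbhd V E u \<inter> N))) \<ge> (\<Sum>u\<in>U. (4 / t) * real n)"
      by (rule sum_mono) (simp add: U_def n_def)
    thus ?thesis using sum1 k_def by simp
  qed
  define P where "P = {T. T \<subseteq> U \<and> card T = s}"
  have finP: "finite P" using finU unfolding P_def by simp
  have cardP: "card P = k choose s" unfolding P_def k_def using n_subsets[OF finU] by simp
  have fewT: "card {w \<in> N. T \<subseteq> nbhd V E w} \<le> s - 1" if "T \<in> P" for T
  proof (rule ccontr)
    assume "\<not> ?thesis"
    hence "s \<le> card {w \<in> N. T \<subseteq> nbhd V E w}" by simp
    then obtain B where B: "B \<subseteq> {w \<in> N. T \<subseteq> nbhd V E w}" "card B = s"
      by (meson obtain_subset_with_card_n)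
    have "contains_Kss V E s" unfolding contains_Kss_def
    proof (intro exI conjI)
      show "T \<subseteq> V" using that UV unfolding P_def by auto
      show "B \<subseteq> V" using B NV by auto
      show "card T = s" using that unfolding P_def by auto
      show "card B = s" by fact
      show "\<forall>a\<in>T. \<forall>b\<in>B. E a b" using B G(3) unfolding nbhd_def by blast
      show "T \<inter> B = {}" using B G(4) unfolding nbhd_def by blast
    qed
    thus False using assms(6) unfolding Kss_free_def by simp
  qed
  have sum2: "(\<Sum>w\<in>N. real (x w choose s)) \<le> real (k choose s) * (real s - 1)"
  proof -
    have "(\<Sum>w\<in>N. real (x w choose s)) = (\<Sum>w\<in>N. \<Sum>T\<in>P. of_bool (T \<subseteq> nbhd V E w))"
    proof (rule sum.cong[OF refl])
      fix w assume "w \<in> N"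
      have fin: "finite (nbhd V E w \<inter> U)" using finU by simp
      have "P \<inter> {T. T \<subseteq> nbhd V E w} = {T. T \<subseteq> nbhd V E w \<inter> U \<and> card T = s}"
        unfolding P_def by auto
      hence "card (P \<inter> {T. T \<subseteq> nbhd V E w}) = x w choose s"
        using n_subsets[OF fin] unfolding x_def by simp
      thus "real (x w choose s) = (\<Sum>T\<in>P. of_bool (T \<subseteq> nbhd V E w))" using finP by simp
    qed
    also have "\<dots> = (\<Sum>T\<in>P. \<Sum>w\<in>N. of_bool (T \<subseteq> nbhd V E w))" by (rule sum.swap)
    also have "\<dots> = (\<Sum>T\<in>P. real (card {w \<in> N. T \<subseteq> nbhd V E w}))"
    proof (rule sum.cong[OF refl])
      fix T
      have "N \<inter> {w. T \<subseteq> nbhd V E w} = {w \<in> N. T \<subseteq> nbhd V E w}" by auto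
      thus "(\<Sum>w\<in>N. of_bool (T \<subseteq> nbhd V E w)) = real (card {w \<in> N. T \<subseteq> nbhd V E w})"
        using finN by simp
    qed
    also have "\<dots> \<le> (\<Sum>T\<in>P. real s - 1)"
    proof (rule sum_mono)
      fix T assume "T \<in> P"
      hence "card {w \<in> N. T \<subseteq> nbhd V E w} \<le> s - 1" by (rule fewT)
      thus "real (card {w \<in> N. T \<subseteq> nbhd V E w}) \<le> real s - 1" using assms(2)
        by (metis Nat.le_diff_conv2 add_leD2 nat_1_add_1 of_nat_1 of_nat_diff of_nat_le_iff)
    qed
    also have "\<dots> = real (k choose s) * (real s - 1)" using cardP by simp
    finally show ?thesis .
  qed
  define b where "b = 2 * real k / t"
  define c where "c = (b / s) ^ (s - 1) / s"
  have bs: "b \<ge> 2 * real s" using kst assms(3) unfolding b_def by (simp add: field_simps)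
  have "(\<Sum>w\<in>N. c * (real (x w) - b)) \<le> (\<Sum>w\<in>N. real (x w choose s))"
    unfolding c_def by (rule sum_mono, rule pw) (use assms(2) bs in auto)
  also have "(\<Sum>w\<in>N. c * (real (x w) - b)) = c * ((\<Sum>w\<in>N. real (x w)) - real n * b)"
    by (simp add: sum_distrib_left sum_subtractf n_def algebra_simps)
  finally have A: "c * ((\<Sum>w\<in>N. real (x w)) - real n * b) \<le> real (k choose s) * (real s - 1)"
    using sum2 by linarith
  have c0: "c \<ge> 0" unfolding c_def using bs by simp
  have "real n * b = real k * ((4 / t) * real n) - real n * b" unfolding b_def by (simp add: field_simps)
  hence "c * (real n * b) \<le> c * ((\<Sum>w\<in>N. real (x w)) - real n * b)"
    using lb1 c0 by (intro mult_left_mono) auto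
  also have "c * (real n * b) = real n * (b / s) ^ s"
  proof -
    have "(b / s) ^ s = (b / s) ^ (s - 1) * (b / s)" using assms(2)
      by (metis One_nat_def Suc_pred' le_trans less_eq_Suc_le one_le_numeral power_Suc2)
    thus ?thesis unfolding c_def using assms(2) by (simp add: field_simps)
  qed
  finally have B: "real n * (b / s) ^ s \<le> real (k choose s) * (real s - 1)" using A by linarith
  have ks: "s \<le> k"
  proof -
    have "real s * 1 \<le> real s * t" using assms(3) by (intro mult_left_mono) auto
    thus ?thesis using kst by simp
  qed
  have "real (k choose s) \<le> real k ^ s" using binomial_le_pow[OF ks] by (metis of_nat_le_iff of_nat_power)
  hence "real (k choose s) * (real s - 1) \<le> real k ^ s * (real s - 1)" using assms(2)
    by (intro mult_right_mono) auto
  hence "real n * (b / s) ^ s \<le> real k ^ s * (real s - 1)" using B by linarith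
  moreover have "(b / s) ^ s = (2 / (t * s)) ^ s * real k ^ s"
  proof -
    have "b / s = (2 / (t * s)) * real k" unfolding b_def by simp
    thus ?thesis by (metis power_mult_distrib)
  qed
  ultimately have C: "real n * (2 / (t * s)) ^ s \<le> real s - 1"
    using kpos by (simp add: mult.assoc[symmetric])
  have ts0: "0 \<le> t * s" using assms(3) by simp
  have tsd: "(t * s) ^ s \<le> real d"
  proof -
    have "t * s \<le> root s (real d)" using assms(4) assms(2) by (simp add: field_simps)
    hence "(t * s) ^ s \<le> root s (real d) ^ s" using ts0 by (intro power_mono) auto
    thus ?thesis using assms(2) by simp
  qed
  have "(2 / (t * s)) ^ s = 2 ^ s / (t * s) ^ s" by (simp add: power_divide)
  hence C2: "real n * (2 ^ s / (t * s) ^ s) \<le> real s - 1" using C by simp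
  have Ppos: "(t * s) ^ s > 0" using assms(2,3) by simp
  have "real n * 2 ^ s = (real n * (2 ^ s / (t * s) ^ s)) * (t * s) ^ s" using Ppos assms(3) by (simp add: field_simps)
  also have "\<dots> \<le> (real s - 1) * (t * s) ^ s" using C2 Ppos by (intro mult_right_mono) auto
  finally have "real n * 2 ^ s \<le> (real s - 1) * (t * s) ^ s" .
  also have "\<dots> \<le> (real s - 1) * real n" using tsd nd assms(2)
    by (intro mult_left_mono) auto
  finally have "2 ^ s \<le> real s - 1" using npos by simp
  moreover have "real s < 2 ^ s" by (metis less_exp of_nat_less_iff of_nat_numeral of_nat_power)
  ultimately show False by linarith
qed

end
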